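(* Let $\lambda_1,\lambda_2,\sigma_1,\sigma_2\in\mathbb{C}^*$ and $\eta_1,\eta_2\in\mathbb{C}$ with $\lambda_1\neq\lambda_2$. Let $v$ be a nonzero element of $\Omega(\lambda_1,\eta_1,\sigma_1,0)\otimes\Omega(\lambda_2,\eta_2,\sigma_2,0)$ with $\deg(v)=(p',q',s',t')$. Then: (1) if $p'>0$, then $\deg(I_0v-\sigma_1v-\sigma_2v)=(p'-1,q',s',t')$; (2) if $p'=0$ and $q'>0$, then there exists $m\in\mathbb{Z}$ with $\deg(I_mv-\lambda_1^m\sigma_1v-\lambda_2^m\sigma_2v)=(0,q'-1,s',t')$; (3) if $p'=q'=0$ and $s'>0$, then there exists $m\in\mathbb{Z}$ with $\deg(I_mv-\lambda_1^m\sigma_1v-\lambda_2^m\sigma_2v)=(0,0,s'-1,t')$; (4) if $p'=q'=s'=0$ and $t'>0$, then there exists $m\in\mathbb{Z}$ with $\deg(I_mv-\lambda_1^m\sigma_1v-\lambda_2^m\sigma_2v)=(0,0,0,t'-1)$.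
   Context: The planar Galilean conformal algebra $\mathcal{G}$ is the complex Lie algebra with basis $\{L_m,H_m,I_m,J_m\mid m\in\mathbb{Z}\}$ and brackets $[L_m,L_n]=(n-m)L_{m+n}$, $[L_m,H_n]=nH_{m+n}$, $[L_m,I_n]=(n-m)I_{m+n}$, $[L_m,J_n]=(n-m)J_{m+n}$, $[H_m,I_n]=I_{m+n}$, $[H_m,J_n]=-J_{m+n}$, and $[H_m,H_n]=[I_m,I_n]=[J_m,J_n]=[I_m,J_n]=0$ for all $m,n\in\mathbb{Z}$. For $\lambda,\sigma\in\mathbb{C}^*$, $\eta\in\mathbb{C}$, the module $\Omega(\lambda,\eta,\sigma,0)$ is a polynomial algebra in two variables with $L_m f(X,Y)=\lambda^m(Y-mX+m\eta)f(X,Y-m)$, $H_m f(X,Y)=\lambda^m X f(X,Y-m)$, $I_m f(X,Y)=\lambda^m\sigma f(X-1,Y-m)$, $J_m f(X,Y)=0$. Here $\Omega(\lambda_1,\eta_1,\sigma_1,0)=\mathbb{C}[X,Y]$ and $\Omega(\lambda_2,\eta_2,\sigma_2,0)=\mathbb{C}[X_1,Y_1]$ (same formulas with $X_1,Y_1$). The tensor product has action $x(v\otimes w)=xv\otimes w+v\otimes xw$. Total order $\succ$ on $\mathbb{N}^4$: with $\mathbf{w}(\bar\alpha)=\alpha_1+\alpha_2+\alpha_3+\alpha_4$, $\bar\alpha\succ\bar\beta$ iff $\mathbf{w}(\bar\alpha)>\mathbf{w}(\bar\beta)$, or the weights are equal and $(\alpha_4,\alpha_3,\alpha_2,\alpha_1)$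 is lexicographically larger than $(\beta_4,\beta_3,\beta_2,\beta_1)$. For nonzero $v=\sum\beta_{ijkl}X^iY^j\otimes X_1^kY_1^l$, $\mathrm{Supp}(v)=\{(i,j,k,l)\mid\beta_{ijkl}\neq0\}$ and $\deg(v)$ is the $\succ$-maximal element of $\mathrm{Supp}(v)$. *)

theory Defs
  imports Complex_Main
begin

text \<open>An element of Omega(lam1,eta1,sig1,0) (x) Omega(lam2,eta2,sig2,0) = C[X,Y] (x) C[X1,Y1]
  is represented by its coefficient function: v (i,j,k,l) is the coefficient of
  X^i Y^j (x) X1^k Y1^l.  Genuine elements have finite support.\<close>

type_synonym tens = "nat \<times> nat \<times> nat \<times> nat \<Rightarrow> complex"

definition supp :: "tens \<Rightarrow> (nat \<times> nat \<times> nat \<times> nat) set" where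
  "supp v = {e. v e \<noteq> 0}"

definition succ4 :: "nat \<times> nat \<times> nat \<times> nat \<Rightarrow> nat \<times> nat \<times> nat \<times> nat \<Rightarrow> bool" where
  "succ4 \<alpha> \<beta> \<longleftrightarrow> (case \<alpha> of (a1,a2,a3,a4) \<Rightarrow> case \<beta> of (b1,b2,b3,b4) \<Rightarrow>
      a1+a2+a3+a4 > b1+b2+b3+b4 \<or>
      (a1+a2+a3+a4 = b1+b2+b3+b4 \<and>
        (a4 > b4 \<or> (a4 = b4 \<and> (a3 > b3 \<or> (a3 = b3 \<and> (a2 > b2 \<or> (a2 = b2 \<and> a1 > b1))))))))"

definition deg :: "tens \<Rightarrow> nat \<times> nat \<times> nat \<times> nat" where
  "deg v = (THE d. d \<in> supp v \<and> (\<forall>e\<in>supp v. e \<noteq> d \<longrightarrow> succ4 d e))"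

text \<open>Coefficient of Z^a in (Z - s)^i.\<close>
definition shift_coef :: "nat \<Rightarrow> nat \<Rightarrow> complex \<Rightarrow> complex" where
  "shift_coef i a s = of_nat (i choose a) * (- s) ^ (i - a)"

text \<open>I_m acting on the first tensor factor: f(X,Y) \<mapsto> lam^m sig f(X-1,Y-m).\<close>
definition I_first :: "complex \<Rightarrow> complex \<Rightarrow> int \<Rightarrow> tens \<Rightarrow> tens" where
  "I_first lam sig m v = (\<lambda>(a,b,c,d). lam powi m * sig *
     (\<Sum>(i,j,k,l)\<in>{e \<in> supp v. snd (snd e) = (c,d)}.
        v (i,j,k,l) * shift_coef i a 1 * shift_coef j b (of_int m)))"

text \<open>I_m acting on the second tensor factor: g(X1,Y1) \<mapsto> lam^m sig g(X1-1,Y1-m).\<close>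
definition I_second :: "complex \<Rightarrow> complex \<Rightarrow> int \<Rightarrow> tens \<Rightarrow> tens" where
  "I_second lam sig m v = (\<lambda>(a,b,c,d). lam powi m * sig *
     (\<Sum>(i,j,k,l)\<in>{e \<in> supp v. fst e = a \<and> fst (snd e) = b}.
        v (i,j,k,l) * shift_coef k c 1 * shift_coef l d (of_int m)))"

text \<open>I_m on the tensor product: I_m (v (x) w) = I_m v (x) w + v (x) I_m w.\<close>
definition I_tens :: "complex \<Rightarrow> complex \<Rightarrow> complex \<Rightarrow> complex \<Rightarrow> int \<Rightarrow> tens \<Rightarrow> tens" where
  "I_tens lam1 sig1 lam2 sig2 m v = (\<lambda>e. I_first lam1 sig1 m v e + I_second lam2 sig2 m v e)"

end

theory Submission
  imports Defs
begin

definition wt :: "nat\<times>nat\<times>nat\<times>nat \<Rightarrow> nat" where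
  "wt e = (case e of (a,b,c,d) \<Rightarrow> a+b+c+d)"

lemma succ4_irrefl: "\<not> succ4 x x"
  by (cases x) (auto simp: succ4_def)

lemma succ4_asym: "succ4 x y \<Longrightarrow> \<not> succ4 y x"
  by (cases x; cases y) (auto simp: succ4_def)

lemma succ4_trans: "succ4 x y \<Longrightarrow> succ4 y z \<Longrightarrow> succ4 x z"
  by (cases x; cases y; cases z) (auto simp: succ4_def)

lemma succ4_total: "x \<noteq> y \<Longrightarrow> succ4 x y \<or> succ4 y x"
  by (cases x; cases y) (auto simp: succ4_def)

lemma succ4_wt: "succ4 x y \<Longrightarrow> wt y \<le> wt x"
  by (cases x; cases y) (auto simp: succ4_def wt_def)

lemma max_exists:
  assumes "finite S" "S \<noteq> {}"
  shows "\<exists>d\<in>S. \<forall>e\<in>S. e \<noteq> d \<longrightarrow> succ4 d e"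
  using assms
proof (induction S rule: finite_ne_induct)
  case (singleton x) then show ?case by auto
next
  case (insert x F)
  then obtain d where d: "d \<in> F" "\<forall>e\<in>F. e \<noteq> d \<longrightarrow> succ4 d e" by auto
  show ?case
  proof (cases "succ4 x d")
    case True
    have "\<forall>e\<in>insert x F. e \<noteq> x \<longrightarrow> succ4 x e"
      using d True by (auto intro: succ4_trans)
    then show ?thesis by blast
  next
    case False
    then have "x \<noteq> d \<longrightarrow> succ4 d x" using succ4_total by blast
    then have "\<forall>e\<in>insert x F. e \<noteq> d \<longrightarrow> succ4 d e" using d by blast
    then show ?thesis using d(1) by blast
  qed
qed

lemma deg_eqI:
  assumes "d \<in> supp w" "\<forall>e\<in>supp w. e \<noteq> d \<longrightarrow> succ4 d e"
  shows "deg w = d"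
  unfolding deg_def
proof (rule the_equality)
  show "d \<in> supp w \<and> (\<forall>e\<in>supp w. e \<noteq> d \<longrightarrow> succ4 d e)" using assms by auto
next
  fix d' assume h: "d' \<in> supp w \<and> (\<forall>e\<in>supp w. e \<noteq> d' \<longrightarrow> succ4 d' e)"
  show "d' = d"
  proof (rule ccontr)
    assume ne: "d' \<noteq> d"
    have A: "\<forall>e\<in>supp w. e \<noteq> d' \<longrightarrow> succ4 d' e" using h by simp
    have B: "d' \<in> supp w" using h by simp
    have "succ4 d' d" using A assms(1) ne by metis
    moreover have "succ4 d d'" using assms(2) B ne by metis
    ultimately show False using succ4_asym by blast
  qed
qed

lemma deg_prop:
  assumes "finite (supp w)" "supp w \<noteq> {}"
  shows "deg w \<in> supp w \<and> (\<forall>e\<in>supp w. e \<noteq> deg w \<longrightarrow> succ4 (deg w) e)"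
proof -
  obtain d where "d\<in>supp w" "\<forall>e\<in>supp w. e \<noteq> d \<longrightarrow> succ4 d e"
    using max_exists[OF assms] by blast
  moreover then have "deg w = d" by (rule deg_eqI)
  ultimately show ?thesis by simp
qed

lemma sc_zero: "i < a \<Longrightarrow> shift_coef i a s = 0"
  by (simp add: shift_coef_def)

lemma first_formula:
  assumes fin: "finite (supp v)" and W: "\<forall>e'\<in>supp v. wt e' \<le> a+b+c+d+1"
  shows "I_first lam sig m v (a,b,c,d) = lam powi m * sig *
     (v(a,b,c,d) - of_nat (a+1) * v(a+1,b,c,d) - of_nat (b+1) * of_int m * v(a,b+1,c,d))"
proof -
  define A where "A = {e \<in> supp v. snd (snd e) = (c,d)}"
  define g where "g = (\<lambda>(i,j,k,l). v(i,j,k,l) * shift_coef i a 1 * shift_coef j b (of_int m))"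
  define F where "F = {(a,b,c,d),(a+1,b,c,d),(a,b+1,c,d)}"
  have 0: "I_first lam sig m v (a,b,c,d) = lam powi m * sig * sum g A"
    by (simp add: I_first_def g_def A_def)
  have fA: "finite A" using fin by (simp add: A_def)
  have 1: "sum g A = sum g (A \<inter> F)"
  proof (rule sum.mono_neutral_right[OF fA])
    show "A \<inter> F \<subseteq> A" by auto
    show "\<forall>x\<in>A - A \<inter> F. g x = 0"
    proof
      fix x assume x: "x \<in> A - A \<inter> F"
      obtain i j k l where xe: "x = (i,j,k,l)" by (cases x) auto
      have kl: "k = c" "l = d" and sx: "x \<in> supp v" using x xe by (auto simp: A_def)
      have w: "i+j+k+l \<le> a+b+c+d+1" using W sx xe by (auto simp: wt_def)
      have nF: "x \<notin> F" using x by auto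
      show "g x = 0"
      proof (cases "i < a \<or> j < b")
        case True then show ?thesis by (auto simp: g_def xe sc_zero)
      next
        case False
        then have "(i = a \<and> j = b) \<or> (i = a+1 \<and> j = b) \<or> (i = a \<and> j = b+1)" using w kl by auto
        then have "x \<in> F" using xe kl by (auto simp: F_def)
        then show ?thesis using nF by auto
      qed
    qed
  qed
  have 2: "sum g F = sum g (A \<inter> F)"
  proof (rule sum.mono_neutral_right)
    show "finite F" by (simp add: F_def)
    show "A \<inter> F \<subseteq> F" by auto
    show "\<forall>x\<in>F - A \<inter> F. g x = 0"
    proof
      fix x assume x: "x \<in> F - A \<inter> F"
      then have "x \<notin> supp v" by (auto simp: F_def A_def)
      then have "v x = 0" by (simp add: supp_def)
      then show "g x = 0" by (cases x) (simp add: g_def)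
    qed
  qed
  have 3: "sum g F = v(a,b,c,d) - of_nat (a+1) * v(a+1,b,c,d) - of_nat (b+1) * of_int m * v(a,b+1,c,d)"
    by (simp add: F_def g_def shift_coef_def algebra_simps)
  show ?thesis using 0 1 2 3 by simp
qed


lemma second_formula:
  assumes fin: "finite (supp v)" and W: "\<forall>e'\<in>supp v. wt e' \<le> a+b+c+d+1"
  shows "I_second lam sig m v (a,b,c,d) = lam powi m * sig *
     (v(a,b,c,d) - of_nat (c+1) * v(a,b,c+1,d) - of_nat (d+1) * of_int m * v(a,b,c,d+1))"
proof -
  define A where "A = {e \<in> supp v. fst e = a \<and> fst (snd e) = b}"
  define g where "g = (\<lambda>(i,j,k,l). v(i,j,k,l) * shift_coef k c 1 * shift_coef l d (of_int m))"
  define F where "F = {(a,b,c,d),(a,b,c+1,d),(a,b,c,d+1)}"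
  have 0: "I_second lam sig m v (a,b,c,d) = lam powi m * sig * sum g A"
    by (simp add: I_second_def g_def A_def)
  have fA: "finite A" using fin by (simp add: A_def)
  have 1: "sum g A = sum g (A \<inter> F)"
  proof (rule sum.mono_neutral_right[OF fA])
    show "A \<inter> F \<subseteq> A" by auto
    show "\<forall>x\<in>A - A \<inter> F. g x = 0"
    proof
      fix x assume x: "x \<in> A - A \<inter> F"
      obtain i j k l where xe: "x = (i,j,k,l)" by (cases x) auto
      have kl: "i = a" "j = b" and sx: "x \<in> supp v" using x xe by (auto simp: A_def)
      have w: "i+j+k+l \<le> a+b+c+d+1" using W sx xe by (auto simp: wt_def)
      have nF: "x \<notin> F" using x by auto
      show "g x = 0"
      proof (cases "k < c \<or> l < d")
        case True then show ?thesis by (auto simp: g_def xe sc_zero)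
      next
        case False
        then have "(k = c \<and> l = d) \<or> (k = c+1 \<and> l = d) \<or> (k = c \<and> l = d+1)" using w kl by auto
        then have "x \<in> F" using xe kl by (auto simp: F_def)
        then show ?thesis using nF by auto
      qed
    qed
  qed
  have 2: "sum g F = sum g (A \<inter> F)"
  proof (rule sum.mono_neutral_right)
    show "finite F" by (simp add: F_def)
    show "A \<inter> F \<subseteq> F" by auto
    show "\<forall>x\<in>F - A \<inter> F. g x = 0"
    proof
      fix x assume x: "x \<in> F - A \<inter> F"
      then have "x \<notin> supp v" by (auto simp: F_def A_def)
      then have "v x = 0" by (simp add: supp_def)
      then show "g x = 0" by (cases x) (simp add: g_def)
    qed
  qed
  have 3: "sum g F = v(a,b,c,d) - of_nat (c+1) * v(a,b,c+1,d) - of_nat (d+1) * of_int m * v(a,b,c,d+1)"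
    by (simp add: F_def g_def shift_coef_def algebra_simps)
  show ?thesis using 0 1 2 3 by simp
qed

lemma diff_formula:
  assumes fin: "finite (supp v)" and W: "\<forall>e'\<in>supp v. wt e' \<le> a+b+c+d+1"
  shows "I_tens l1 s1 l2 s2 m v (a,b,c,d) - l1 powi m * s1 * v (a,b,c,d) - l2 powi m * s2 * v (a,b,c,d)
    = - (l1 powi m * s1 * (of_nat (a+1) * v(a+1,b,c,d) + of_nat (b+1) * of_int m * v(a,b+1,c,d))
       + l2 powi m * s2 * (of_nat (c+1) * v(a,b,c+1,d) + of_nat (d+1) * of_int m * v(a,b,c,d+1)))"
  unfolding I_tens_def first_formula[OF assms] second_formula[OF assms]
  by (simp add: algebra_simps)

lemma alg:
  fixes l1 l2 A B D E :: complex
  assumes "l1 \<noteq> l2" "l1 \<noteq> 0" "l2 \<noteq> 0"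
    and h: "\<And>n::nat. n \<le> 3 \<Longrightarrow> l1^n*(A + of_nat n * B) + l2^n*(D + of_nat n * E) = 0"
  shows "A = 0 \<and> B = 0 \<and> D = 0 \<and> E = 0"
proof -
  have u0: "A + D = 0" using h[of 0] by simp
  have u1: "l1*(A+B) + l2*(D+E) = 0" using h[of 1] by simp
  have u2: "l1^2*(A+2*B) + l2^2*(D+2*E) = 0" using h[of 2] by simp
  have u3: "l1^3*(A+3*B) + l2^3*(D+3*E) = 0" using h[of 3] by simp
  have "(l1-l2)^2*A + 2*l1*(l1-l2)*B = (l1^2*(A+2*B) + l2^2*(D+2*E)) - 2*l2*(l1*(A+B) + l2*(D+E)) + l2^2*(A+D)"
    by algebra
  then have e0: "(l1-l2)^2*A + 2*l1*(l1-l2)*B = 0" using u0 u1 u2 by simp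
  have "l1*((l1-l2)^2*(A+B) + 2*l1*(l1-l2)*B) = (l1^3*(A+3*B) + l2^3*(D+3*E)) - 2*l2*(l1^2*(A+2*B) + l2^2*(D+2*E)) + l2^2*(l1*(A+B) + l2*(D+E))"
    by algebra
  then have "l1*((l1-l2)^2*(A+B) + 2*l1*(l1-l2)*B) = 0" using u1 u2 u3 by simp
  then have e1: "(l1-l2)^2*(A+B) + 2*l1*(l1-l2)*B = 0" using assms(2) by simp
  have "(l1-l2)^2*B = 0" using e0 e1 by algebra
  then have B: "B = 0" using assms(1) by simp
  then have A: "A = 0" using e0 assms(1) by simp
  then have D: "D = 0" using u0 by simp
  then have E: "E = 0" using u1 A B assms(3) by simp
  show ?thesis using A B D E by simp
qed

lemma above_zero:
  assumes "succ4 x T" "\<forall>e\<in>supp v. e = T \<or> succ4 T e"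
  shows "v x = 0"
proof (rule ccontr)
  assume "v x \<noteq> 0"
  then have "x \<in> supp v" by (simp add: supp_def)
  then have "x = T \<or> succ4 T x" using assms(2) by blast
  then show False using assms(1) succ4_asym succ4_irrefl by metis
qed

lemma deg_result:
  fixes v :: tens and D T :: "nat\<times>nat\<times>nat\<times>nat"
  assumes fin: "finite (supp v)"
    and top: "\<forall>e\<in>supp v. e = T \<or> succ4 T e"
    and hD: "wt D + 1 = wt T"
    and nz: "I_tens l1 s1 l2 s2 m v D - l1 powi m * s1 * v D - l2 powi m * s2 * v D \<noteq> 0"
    and hnb: "\<And>a b c d. succ4 (a,b,c,d) D \<Longrightarrow>
       v(a+1,b,c,d) = 0 \<and> v(a,b+1,c,d) = 0 \<and> v(a,b,c+1,d) = 0 \<and> v(a,b,c,d+1) = 0"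
  shows "deg (\<lambda>e. I_tens l1 s1 l2 s2 m v e - l1 powi m * s1 * v e - l2 powi m * s2 * v e) = D"
proof (rule deg_eqI)
  show "D \<in> supp (\<lambda>e. I_tens l1 s1 l2 s2 m v e - l1 powi m * s1 * v e - l2 powi m * s2 * v e)"
    using nz by (simp add: supp_def)
  have wtT: "\<forall>e'\<in>supp v. wt e' \<le> wt T"
  proof
    fix e' assume "e' \<in> supp v"
    then have "e' = T \<or> succ4 T e'" using top by blast
    then show "wt e' \<le> wt T" using succ4_wt[of T e'] by auto
  qed
  show "\<forall>e\<in>supp (\<lambda>e. I_tens l1 s1 l2 s2 m v e - l1 powi m * s1 * v e - l2 powi m * s2 * v e).
          e \<noteq> D \<longrightarrow> succ4 D e"
  proof (intro ballI impI)
    fix e assume e: "e \<in> supp (\<lambda>e. I_tens l1 s1 l2 s2 m v e - l1 powi m * s1 * v e - l2 powi m * s2 * v e)"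
      and ne: "e \<noteq> D"
    show "succ4 D e"
    proof (rule ccontr)
      assume "\<not> succ4 D e"
      then have s: "succ4 e D" using succ4_total ne by blast
      obtain a b c d where ee: "e = (a,b,c,d)" by (cases e) auto
      have "wt D \<le> wt e" using succ4_wt[OF s] .
      then have W: "\<forall>e'\<in>supp v. wt e' \<le> a+b+c+d+1" using wtT hD ee by (auto simp: wt_def)
      have z: "v(a+1,b,c,d) = 0 \<and> v(a,b+1,c,d) = 0 \<and> v(a,b,c+1,d) = 0 \<and> v(a,b,c,d+1) = 0"
        using hnb s ee by blast
      have "I_tens l1 s1 l2 s2 m v e - l1 powi m * s1 * v e - l2 powi m * s2 * v e = 0"
        using diff_formula[OF fin W, of l1 s1 l2 s2 m] z ee by simp
      then show False using e by (simp add: supp_def)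
    qed
  qed
qed


lemma nb_zero:
  assumes "\<forall>e\<in>supp v. e = T \<or> succ4 T e" "x = T \<or> succ4 T x \<Longrightarrow> False"
  shows "v x = 0"
proof (rule ccontr)
  assume "v x \<noteq> 0"
  then have "x \<in> supp v" by (simp add: supp_def)
  then show False using assms by blast
qed

lemma arith1: "succ4 (a,b,c,d) (p',q,s,t) \<Longrightarrow> x \<in> {(a+1,b,c,d),(a,b+1,c,d),(a,b,c+1,d),(a,b,c,d+1)} \<Longrightarrow>
   x = (Suc p',q,s,t) \<or> succ4 (Suc p',q,s,t) x \<Longrightarrow> False"
  unfolding succ4_def by auto
lemma arith2: "succ4 (a,b,c,d) (0,q',s,t) \<Longrightarrow> x \<in> {(a+1,b,c,d),(a,b+1,c,d),(a,b,c+1,d),(a,b,c,d+1)} \<Longrightarrow>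
   x = (0,Suc q',s,t) \<or> succ4 (0,Suc q',s,t) x \<Longrightarrow> False"
  unfolding succ4_def by auto
lemma arith3: "succ4 (a,b,c,d) (0,0,s',t) \<Longrightarrow> x \<in> {(a+1,b,c,d),(a,b+1,c,d),(a,b,c+1,d),(a,b,c,d+1)} \<Longrightarrow>
   x = (0,0,Suc s',t) \<or> succ4 (0,0,Suc s',t) x \<Longrightarrow> False"
  unfolding succ4_def by auto
lemma arith4: "succ4 (a,b,c,d) (0,0,0,t') \<Longrightarrow> x \<in> {(a+1,b,c,d),(a,b+1,c,d),(a,b,c+1,d),(a,b,c,d+1)} \<Longrightarrow>
   x = (0,0,0,Suc t') \<or> succ4 (0,0,0,Suc t') x \<Longrightarrow> False"
  unfolding succ4_def by auto

lemma hnb_from: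
  assumes top: "\<forall>e\<in>supp v. e = T \<or> succ4 T e"
    and A: "\<And>a b c d x. succ4 (a,b,c,d) D \<Longrightarrow> x \<in> {(a+1,b,c,d),(a,b+1,c,d),(a,b,c+1,d),(a,b,c,d+1)} \<Longrightarrow>
        x = T \<or> succ4 T x \<Longrightarrow> False"
    and h: "succ4 (a,b,c,d) D"
  shows "v(a+1,b,c,d) = 0 \<and> v(a,b+1,c,d) = 0 \<and> v(a,b,c+1,d) = 0 \<and> v(a,b,c,d+1) = 0"
proof -
  have "\<And>x. x \<in> {(a+1,b,c,d),(a,b+1,c,d),(a,b,c+1,d),(a,b,c,d+1)} \<Longrightarrow> v x = 0"
    using nb_zero[OF top] A[OF h] by blast
  then show ?thesis by simp
qed

lemma final_step:
  fixes v :: tens and D T :: "nat\<times>nat\<times>nat\<times>nat"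
  assumes fin: "finite (supp v)"
    and top: "\<forall>e\<in>supp v. e = T \<or> succ4 T e"
    and hD: "wt D + 1 = wt T"
    and l: "l1 \<noteq> l2" "l1 \<noteq> 0" "l2 \<noteq> 0"
    and hnb: "\<And>a b c d. succ4 (a,b,c,d) D \<Longrightarrow>
       v(a+1,b,c,d) = 0 \<and> v(a,b+1,c,d) = 0 \<and> v(a,b,c+1,d) = 0 \<and> v(a,b,c,d+1) = 0"
    and hval: "\<And>n. I_tens l1 s1 l2 s2 (int n) v D - l1 powi (int n) * s1 * v D - l2 powi (int n) * s2 * v D
        = -(l1^n*(A + of_nat n*B) + l2^n*(D' + of_nat n*E))"
    and nz: "\<not>(A=0 \<and> B=0 \<and> D'=0 \<and> E=0)"
  shows "\<exists>m::int. deg (\<lambda>e. I_tens l1 s1 l2 s2 m v e - l1 powi m * s1 * v e - l2 powi m * s2 * v e) = D"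
proof -
  obtain n :: nat where "n \<le> 3" "l1^n*(A + of_nat n*B) + l2^n*(D' + of_nat n*E) \<noteq> 0"
    using alg[OF l, of A B D' E] nz by blast
  then have "I_tens l1 s1 l2 s2 (int n) v D - l1 powi (int n) * s1 * v D - l2 powi (int n) * s2 * v D \<noteq> 0"
    using hval[of n] by (metis neg_equal_0_iff_equal)
  then show ?thesis using deg_result[OF fin top hD _ hnb] by blast
qed

theorem lemma4p1:
  fixes lam1 lam2 sig1 sig2 eta1 eta2 :: complex
    and v :: tens and p q s t :: nat
  assumes "lam1 \<noteq> 0" and "lam2 \<noteq> 0" and "sig1 \<noteq> 0" and "sig2 \<noteq> 0"
    and "lam1 \<noteq> lam2"
    and "finite (supp v)" and "supp v \<noteq> {}"
    and "deg v = (p, q, s, t)"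
  shows "(p > 0 \<longrightarrow>
            deg (\<lambda>e. I_tens lam1 sig1 lam2 sig2 0 v e - sig1 * v e - sig2 * v e) = (p - 1, q, s, t))
       \<and> (p = 0 \<and> q > 0 \<longrightarrow> (\<exists>m::int.
            deg (\<lambda>e. I_tens lam1 sig1 lam2 sig2 m v e - lam1 powi m * sig1 * v e - lam2 powi m * sig2 * v e)
              = (0, q - 1, s, t)))
       \<and> (p = 0 \<and> q = 0 \<and> s > 0 \<longrightarrow> (\<exists>m::int.
            deg (\<lambda>e. I_tens lam1 sig1 lam2 sig2 m v e - lam1 powi m * sig1 * v e - lam2 powi m * sig2 * v e)
              = (0, 0, s - 1, t)))
       \<and> (p = 0 \<and> q = 0 \<and> s = 0 \<and> t > 0 \<longrightarrow> (\<exists>m::int.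
            deg (\<lambda>e. I_tens lam1 sig1 lam2 sig2 m v e - lam1 powi m * sig1 * v e - lam2 powi m * sig2 * v e)
              = (0, 0, 0, t - 1)))"
proof -
  note fin = assms(6)
  define T where "T = (p,q,s,t)"
  have dp: "T \<in> supp v \<and> (\<forall>e\<in>supp v. e \<noteq> T \<longrightarrow> succ4 T e)"
    using deg_prop[OF assms(6,7)] assms(8) by (simp add: T_def)
  have top: "\<forall>e\<in>supp v. e = T \<or> succ4 T e" using dp by blast
  have cT: "v (p,q,s,t) \<noteq> 0" using dp by (simp add: supp_def T_def)
  have wtT: "\<forall>e'\<in>supp v. wt e' \<le> p+q+s+t"
  proof
    fix e' assume "e' \<in> supp v"
    then have "e' = T \<or> succ4 T e'" using top by blast
    then show "wt e' \<le> p+q+s+t" using succ4_wt[of T e'] by (auto simp: T_def wt_def)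
  qed
  have az: "\<And>x. succ4 x T \<Longrightarrow> v x = 0" using above_zero top by blast
  have P1: "deg (\<lambda>e. I_tens lam1 sig1 lam2 sig2 0 v e - sig1 * v e - sig2 * v e) = (p - 1, q, s, t)"
    if pp0: "p > 0"
  proof -
    obtain p' where pp: "p = Suc p'" using pp0 by (cases p) auto
    have z1: "v (p', q, Suc s, t) = 0" by (rule az) (simp add: T_def pp succ4_def)
    have W: "\<forall>e'\<in>supp v. wt e' \<le> p'+q+s+t+1" using wtT pp by auto
    have val: "I_tens lam1 sig1 lam2 sig2 0 v (p',q,s,t) - lam1 powi 0 * sig1 * v (p',q,s,t)
       - lam2 powi 0 * sig2 * v (p',q,s,t) = - (sig1 * of_nat p * v (p,q,s,t))"
      using diff_formula[OF fin W, of lam1 sig1 lam2 sig2 0] z1 pp by simp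
    have nz: "I_tens lam1 sig1 lam2 sig2 0 v (p',q,s,t) - lam1 powi 0 * sig1 * v (p',q,s,t)
       - lam2 powi 0 * sig2 * v (p',q,s,t) \<noteq> 0"
    proof -
      have "(of_nat p :: complex) \<noteq> 0" using pp0 by simp
      then show ?thesis unfolding val using cT assms(3) by simp
    qed
    have "deg (\<lambda>e. I_tens lam1 sig1 lam2 sig2 0 v e - lam1 powi 0 * sig1 * v e - lam2 powi 0 * sig2 * v e) = (p',q,s,t)"
    proof (rule deg_result[OF fin top _ nz])
      show "wt (p', q, s, t) + 1 = wt T" by (simp add: wt_def T_def pp)
      fix a b c d assume h: "succ4 (a, b, c, d) (p', q, s, t)"
      have topS: "\<forall>e\<in>supp v. e = (Suc p',q,s,t) \<or> succ4 (Suc p',q,s,t) e" using top by (simp add: T_def pp)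
      show "v (a + 1, b, c, d) = 0 \<and> v (a, b + 1, c, d) = 0 \<and> v (a, b, c + 1, d) = 0 \<and> v (a, b, c, d + 1) = 0"
        by (rule hnb_from[OF topS arith1 h])
    qed
    then show ?thesis using pp by simp
  qed
  have P2: "\<exists>m::int.
            deg (\<lambda>e. I_tens lam1 sig1 lam2 sig2 m v e - lam1 powi m * sig1 * v e - lam2 powi m * sig2 * v e)
              = (0, q - 1, s, t)" if h0: "p = 0" "q > 0"
  proof -
    obtain q' where qq: "q = Suc q'" using h0 by (cases q) auto
    have topS: "\<forall>e\<in>supp v. e = (0,Suc q',s,t) \<or> succ4 (0,Suc q',s,t) e" using top by (simp add: T_def qq h0)
    have z1: "v (0, q', Suc s, t) = 0" by (rule az) (simp add: T_def qq h0 succ4_def)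
    have z2: "v (0, q', s, Suc t) = 0" by (rule az) (simp add: T_def qq h0 succ4_def)
    have W: "\<forall>e'\<in>supp v. wt e' \<le> 0+q'+s+t+1" using wtT qq h0 by auto
    have "\<exists>m::int. deg (\<lambda>e. I_tens lam1 sig1 lam2 sig2 m v e - lam1 powi m * sig1 * v e - lam2 powi m * sig2 * v e)
              = (0, q', s, t)"
    proof (rule final_step[OF fin topS _ assms(5,1,2) hnb_from[OF topS arith2]])
      show "wt (0, q', s, t) + 1 = wt (0, Suc q', s, t)" by (simp add: wt_def)
      fix n :: nat
      show "I_tens lam1 sig1 lam2 sig2 (int n) v (0, q', s, t) - lam1 powi int n * sig1 * v (0, q', s, t) -
         lam2 powi int n * sig2 * v (0, q', s, t) =
         - (lam1 ^ n * (sig1 * v (1,q',s,t) + of_nat n * (sig1 * of_nat (Suc q') * v (0,Suc q',s,t))) + lam2 ^ n * (0 + of_nat n * 0))"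
        using diff_formula[OF fin W, of lam1 sig1 lam2 sig2 "int n"] z1 z2 by (simp add: algebra_simps)
    next
      show "\<not> (sig1 * v (1,q',s,t) = 0 \<and> sig1 * of_nat (Suc q') * v (0,Suc q',s,t) = 0 \<and> (0::complex) = 0 \<and> (0::complex) = 0)"
      proof -
        have "(of_nat (Suc q') :: complex) \<noteq> 0" by (rule of_nat_neq_0)
        then show ?thesis using assms(3) cT h0 qq by simp
      qed
    qed
    then show ?thesis using qq by simp
  qed
  have P3: "\<exists>m::int.
            deg (\<lambda>e. I_tens lam1 sig1 lam2 sig2 m v e - lam1 powi m * sig1 * v e - lam2 powi m * sig2 * v e)
              = (0, 0, s - 1, t)" if h0: "p = 0" "q = 0" "s > 0"
  proof -
    obtain s' where ss: "s = Suc s'" using h0 by (cases s) auto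
    have topS: "\<forall>e\<in>supp v. e = (0,0,Suc s',t) \<or> succ4 (0,0,Suc s',t) e" using top by (simp add: T_def ss h0)
    have z2: "v (0, 0, s', Suc t) = 0" by (rule az) (simp add: T_def ss h0 succ4_def)
    have W: "\<forall>e'\<in>supp v. wt e' \<le> 0+0+s'+t+1" using wtT ss h0 by auto
    have "\<exists>m::int. deg (\<lambda>e. I_tens lam1 sig1 lam2 sig2 m v e - lam1 powi m * sig1 * v e - lam2 powi m * sig2 * v e)
              = (0, 0, s', t)"
    proof (rule final_step[OF fin topS _ assms(5,1,2) hnb_from[OF topS arith3]])
      show "wt (0, 0, s', t) + 1 = wt (0, 0, Suc s', t)" by (simp add: wt_def)
      fix n :: nat
      show "I_tens lam1 sig1 lam2 sig2 (int n) v (0, 0, s', t) - lam1 powi int n * sig1 * v (0, 0, s', t) -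
         lam2 powi int n * sig2 * v (0, 0, s', t) =
         - (lam1 ^ n * (sig1 * v (1,0,s',t) + of_nat n * (sig1 * v (0,1,s',t))) + lam2 ^ n * (sig2 * of_nat (Suc s') * v (0,0,Suc s',t) + of_nat n * 0))"
        using diff_formula[OF fin W, of lam1 sig1 lam2 sig2 "int n"] z2 by (simp add: algebra_simps)
    next
      show "\<not> (sig1 * v (1,0,s',t) = 0 \<and> sig1 * v (0,1,s',t) = 0 \<and> sig2 * of_nat (Suc s') * v (0,0,Suc s',t) = 0 \<and> (0::complex) = 0)"
      proof -
        have "(of_nat (Suc s') :: complex) \<noteq> 0" by (rule of_nat_neq_0)
        then show ?thesis using assms(4) cT h0 ss by simp
      qed
    qed
    then show ?thesis using ss by simp
  qed
  have P4: "\<exists>m::int.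
            deg (\<lambda>e. I_tens lam1 sig1 lam2 sig2 m v e - lam1 powi m * sig1 * v e - lam2 powi m * sig2 * v e)
              = (0, 0, 0, t - 1)" if h0: "p = 0" "q = 0" "s = 0" "t > 0"
  proof -
    obtain t' where tt: "t = Suc t'" using h0 by (cases t) auto
    have topS: "\<forall>e\<in>supp v. e = (0,0,0,Suc t') \<or> succ4 (0,0,0,Suc t') e" using top by (simp add: T_def tt h0)
    have W: "\<forall>e'\<in>supp v. wt e' \<le> 0+0+0+t'+1" using wtT tt h0 by auto
    have "\<exists>m::int. deg (\<lambda>e. I_tens lam1 sig1 lam2 sig2 m v e - lam1 powi m * sig1 * v e - lam2 powi m * sig2 * v e)
              = (0, 0, 0, t')"
    proof (rule final_step[OF fin topS _ assms(5,1,2) hnb_from[OF topS arith4]])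
      show "wt (0, 0, 0, t') + 1 = wt (0, 0, 0, Suc t')" by (simp add: wt_def)
      fix n :: nat
      show "I_tens lam1 sig1 lam2 sig2 (int n) v (0, 0, 0, t') - lam1 powi int n * sig1 * v (0, 0, 0, t') -
         lam2 powi int n * sig2 * v (0, 0, 0, t') =
         - (lam1 ^ n * (sig1 * v (1,0,0,t') + of_nat n * (sig1 * v (0,1,0,t'))) + lam2 ^ n * (sig2 * v (0,0,1,t') + of_nat n * (sig2 * of_nat (Suc t') * v (0,0,0,Suc t'))))"
        using diff_formula[OF fin W, of lam1 sig1 lam2 sig2 "int n"] by (simp add: algebra_simps)
    next
      show "\<not> (sig1 * v (1,0,0,t') = 0 \<and> sig1 * v (0,1,0,t') = 0 \<and> sig2 * v (0,0,1,t') = 0 \<and> sig2 * of_nat (Suc t') * v (0,0,0,Suc t') = 0)"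
      proof -
        have "(of_nat (Suc t') :: complex) \<noteq> 0" by (rule of_nat_neq_0)
        then show ?thesis using assms(4) cT h0 tt by simp
      qed
    qed
    then show ?thesis using tt by simp
  qed
  show ?thesis using P1 P2 P3 P4 by blast
qed

end
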